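(* Let $M$ be a canonical dtpla with $P_M=\{\hat p_1,\dots,\hat p_n\}$ and let $N$ be a total dtop, all of whose states are reachable, with $Q_N\subseteq T_\Delta(Q_M\times P_M)^n$. Let $\varphi:Q_N\times P_M\to T_\Delta(Q_M\times P_M)$ be given by $\varphi((t_1,\dots,t_n),\hat p_i)=t_i$, and assume $\varphi(q,p)\in T_\Delta(\{\langle\bar q,p\rangle\mid\bar q\in Q_M,\rho_M(\bar q)=p\})$ for all $q\in Q_N$, $p\in P_M$. Suppose $N$ satisfies: (i) $A_N\Phi=\sqcap\{A_M(p)\Omega\mid p\in P_M\}$; (ii) for all $v\in\mathbb N_+^*$, $q\in Q_N$, $p\in P_M$: if $A_N/v=q(x_0)$ then $\varphi(q,p)=A_M(p)\Omega/v$; (iii) for all $q\in Q_N$ and $a\in\Sigma^{(k)}$: $\mathrm{rhs}_N(q,a)\Phi=\sqcap\{\mathrm{rhs}_{M,\varphi}(q,a,p_1,\dots,p_k)\Omega\mid p_1,\dots,p_k\in P_M\}$; (iv) for all $q,\bar q\in Q_N$, $a\in\Sigma^{(k)}$, $i\in[k]$, all trees $s_j\in T_\Sigma$ ($j\in[k]$, $j\neq i$) with $p_j=\delta_M(s_j)$, all $p\in P_M$ and all $v\in V_\bot(\mathrm{rhs}_N(q,a)\Phi)$: if $\mathrm{rhs}_N(q,a)/v=\bar q(x_i)$ then $\varphi(\bar q,p)=\mathrm{rhs}_{M,\varphi}(q,a,p_1,\dots,p_{i-1},p,p_{i+1},\dots,p_k)\Psi_{iM}/v$, where $\Psi_{iM}$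 is the substitution $[\tilde q(x_j)\leftarrow\tilde q_M(s_j)\mid\tilde q\in Q_M,\ j\in[k],\ j\ne i]$ followed by $\Omega$. Then $N$ is equivalent to $M$, i.e., $[\![N]\!]=[\![M]\!]$.
   Context: Trees and patterns. $T_\Delta(Z)$ is the set of trees over ranked alphabet $\Delta$ with extra nullary symbols $Z$; $t/v$ is the subtree at node $v\in\mathbb N_+^*$; $\bot$ is a special nullary symbol; $V_\bot(t)$ is the set of nodes labelled $\bot$. $\sqcap T$ is the greatest lower bound of a finite nonempty set $T$ of trees w.r.t. the order $t\sqsubseteq t'$ ($t'$ obtained from $t$ by replacing occurrences of $\bot$ by trees): the largest common prefix with $\bot$ at the highest nodes of disagreement. A $\Sigma$-context is $C\in T_\Sigma(\{\bot\})$ with exactly one $\bot$. $Q(Y)=\{q(y)\mid q\in Q,y\in Y\}$, $X=\{x_0,x_1,\dots\}$, $X_k=\{x_1,\dots,x_k\}$. Dtlas. A dtla $M$ from $\Sigma$ to $\Delta$ consists of a finite set $Q_M$ of states, a total deterministic bottom-up tree automaton with finite state set $P_M$ and transitions $\delta(a,p_1,\dots,p_k)$, extended to $\delta_M:T_\Sigma\to P_M$ ($[\![p]\!]_M=\delta_M^{-1}(p)$), axioms $A_M(p)\in T_\Delta(Q_M(\{x_0\}))$, and at most one rule $q(a(x_1\langle p_1\rangle,\dots,x_k\langle p_k\rangle))\to\mathrm{rhs}_M(q,a,p_1,\dots,p_k)\in T_\Delta(Q_M(X_k))$ per $q,a,p_1,\dots,p_k$. Semantics: $q_M(a(s_1,\dots,s_k))=\mathrm{rhs}_M(q,a,\delta_M(s_1),\dots,\delta_M(s_k))[q'(x_i)\leftarrow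 q'_M(s_i)]$, $M(s)=A_M(\delta_M(s))[q(x_0)\leftarrow q_M(s)]$. A dtop is a dtla with a single look-ahead state $\bot$; a total dtop $N$ has an axiom $A_N\in T_\Delta(Q_N(\{x_0\}))$ and, for every $q\in Q_N$, $a\in\Sigma^{(k)}$, exactly one rule $q(a(x_1,\dots,x_k))\to\mathrm{rhs}_N(q,a)\in T_\Delta(Q_N(X_k))$. A dtpla has $|P_M|\ge2$. $M(C[p])\in T_\Delta(Q_M\times P_M)$ is the output on context $C$ with the hole treated as a leaf of look-ahead state $p$ and $q_M(p)=\langle q,p\rangle$; $N(C)=N(C[\bot])$. A state is reachable if $\langle q,p\rangle$ labels a node of $M(C[p])$ for some context $C$ and $p$. $M$ is la-uniform if there is $\rho_M:Q_M\to P_M$ with domain of $[\![q]\!]_M$ equal to $[\![\rho_M(q)]\!]_M$, every $q(x_0)$ in $A_M(p)$ having $\rho_M(q)=p$, every $q'(x_i)$ in $\mathrm{rhs}_M(q,a,p_1,\dots,p_k)$ having $\rho_M(q')=p_i$, and the rule for $q,a,p_1,\dots,p_k$ existing iff $\delta(a,p_1,\dots,p_k)=\rho_M(q)$. Earliest: no state $q$ and $d\in\Delta$ such that $q(s)$ has root label $d$ for all $s$ in the domain of $[\![q]\!]$. Canonical: total, la-uniform, earliest, all states reachable, distinct states have distinct translations. For $t\in T_\Delta(Q_M(X))$, $t\Omega$ replaces each $q(x_i)$ by the leaf $\langle q,\rho_M(q)\rangle$. For $t\in T_\Delta(Q_N(X))$, $t\Phi$ replaces each $q(x_i)$ by $\bot$.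 For $q\in Q_N$, $a\in\Sigma^{(k)}$, $p_1,\dots,p_k\in P_M$ and $p=\delta(a,p_1,\dots,p_k)$: $\mathrm{rhs}_{M,\varphi}(q,a,p_1,\dots,p_k)=\varphi(q,p)[\langle\bar q,p\rangle\leftarrow\mathrm{rhs}_M(\bar q,a,p_1,\dots,p_k)\mid\bar q\in Q_M]\in T_\Delta(Q_M(X_k))$. *)

theory Defs
  imports Main
begin

text \<open>Trees over a ranked alphabet of symbols of type 'g (rank given separately),
  with extra nullary leaf symbols of type 'z (constructor Lf) and the special
  nullary symbol bottom (constructor Bot).\<close>

datatype ('g, 'z) tr = Sym 'g "('g, 'z) tr list" | Lf 'z | Bot

fun wfT :: "('g \<Rightarrow> nat) \<Rightarrow> 'g set \<Rightarrow> 'z set \<Rightarrow> ('g, 'z) tr \<Rightarrow> bool" where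
  "wfT rk D Z (Sym g ts) = (g \<in> D \<and> length ts = rk g \<and> (\<forall>t\<in>set ts. wfT rk D Z t))"
| "wfT rk D Z (Lf z) = (z \<in> Z)"
| "wfT rk D Z Bot = False"

fun wfTb :: "('g \<Rightarrow> nat) \<Rightarrow> 'g set \<Rightarrow> 'z set \<Rightarrow> ('g, 'z) tr \<Rightarrow> bool" where
  "wfTb rk D Z (Sym g ts) = (g \<in> D \<and> length ts = rk g \<and> (\<forall>t\<in>set ts. wfTb rk D Z t))"
| "wfTb rk D Z (Lf z) = (z \<in> Z)"
| "wfTb rk D Z Bot = True"

fun nbots :: "('g, 'z) tr \<Rightarrow> nat" where
  "nbots (Sym g ts) = sum_list (map nbots ts)"
| "nbots (Lf z) = 0"
| "nbots Bot = 1"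

type_synonym 'f itr = "('f, unit) tr"

definition is_context :: "('f \<Rightarrow> nat) \<Rightarrow> 'f set \<Rightarrow> 'f itr \<Rightarrow> bool" where
  "is_context rk S C \<longleftrightarrow> wfTb rk S {} C \<and> nbots C = 1"

text \<open>Subtree at node v (nodes are lists of positive naturals); None if v is not a node.\<close>
fun subt :: "('g, 'z) tr \<Rightarrow> nat list \<Rightarrow> ('g, 'z) tr option" where
  "subt t [] = Some t"
| "subt (Sym g ts) (i # v) = (if 1 \<le> i \<and> i \<le> length ts then subt (ts ! (i - 1)) v else None)"
| "subt (Lf z) (i # v) = None"
| "subt Bot (i # v) = None"

definition occurs :: "'z \<Rightarrow> ('g, 'z) tr \<Rightarrow> bool" where
  "occurs x t \<longleftrightarrow> (\<exists>v. subt t v = Some (Lf x))"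

definition Vbot :: "('g, 'z) tr \<Rightarrow> nat list set" where
  "Vbot t = {v. subt t v = Some Bot}"

inductive le_tr :: "('g, 'z) tr \<Rightarrow> ('g, 'z) tr \<Rightarrow> bool" where
  "le_tr Bot t"
| "le_tr (Lf z) (Lf z)"
| "list_all2 le_tr ts us \<Longrightarrow> le_tr (Sym g ts) (Sym g us)"

definition glb :: "('g, 'z) tr set \<Rightarrow> ('g, 'z) tr" where
  "glb T = (THE g. (\<forall>t\<in>T. le_tr g t) \<and> (\<forall>g'. (\<forall>t\<in>T. le_tr g' t) \<longrightarrow> le_tr g' g))"

fun subst :: "('g, 'z) tr \<Rightarrow> ('z \<Rightarrow> ('g, 'w) tr) \<Rightarrow> ('g, 'w) tr" where
  "subst (Sym g ts) \<sigma> = Sym g (map (\<lambda>t. subst t \<sigma>) ts)"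
| "subst (Lf z) \<sigma> = \<sigma> z"
| "subst Bot \<sigma> = Bot"

fun osubst :: "('g, 'z) tr \<Rightarrow> ('z \<Rightarrow> ('g, 'w) tr option) \<Rightarrow> ('g, 'w) tr option" where
  "osubst (Sym g ts) \<sigma> = (let rs = map (\<lambda>t. osubst t \<sigma>) ts in
      if None \<in> set rs then None else Some (Sym g (map the rs)))"
| "osubst (Lf z) \<sigma> = \<sigma> z"
| "osubst Bot \<sigma> = Some Bot"

definition Phi :: "('g, 'z) tr \<Rightarrow> ('g, 'w) tr" where
  "Phi t = subst t (\<lambda>_. Bot)"

text \<open>A leaf (q, i) of an axiom / right-hand side stands for q(x_i).\<close>
record ('f, 'g, 'q, 'p) dtla =
  Qs :: "'q set"
  Ps :: "'p set"
  dl :: "'f \<Rightarrow> 'p list \<Rightarrow> 'p"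
  ax :: "'p \<Rightarrow> ('g, 'q \<times> nat) tr"
  rl :: "'q \<Rightarrow> 'f \<Rightarrow> 'p list \<Rightarrow> ('g, 'q \<times> nat) tr option"

definition is_dtla :: "('f \<Rightarrow> nat) \<Rightarrow> 'f set \<Rightarrow> ('g \<Rightarrow> nat) \<Rightarrow> 'g set
    \<Rightarrow> ('f, 'g, 'q, 'p) dtla \<Rightarrow> bool" where
  "is_dtla rk S rkD D M \<longleftrightarrow>
     finite (Qs M) \<and> finite (Ps M) \<and> Ps M \<noteq> {} \<and>
     (\<forall>a\<in>S. \<forall>ps. length ps = rk a \<and> set ps \<subseteq> Ps M \<longrightarrow> dl M a ps \<in> Ps M) \<and>
     (\<forall>p\<in>Ps M. wfT rkD D (Qs M \<times> {0}) (ax M p)) \<and>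
     (\<forall>q a ps t. rl M q a ps = Some t \<longrightarrow>
        q \<in> Qs M \<and> a \<in> S \<and> length ps = rk a \<and> set ps \<subseteq> Ps M \<and>
        wfT rkD D (Qs M \<times> {1..rk a}) t)"

text \<open>Run of the look-ahead automaton; the hole bottom (of a context) gets look-ahead state hp.\<close>
fun dlt :: "('f, 'g, 'q, 'p) dtla \<Rightarrow> 'p \<Rightarrow> 'f itr \<Rightarrow> 'p" where
  "dlt M hp (Sym a ss) = dl M a (map (dlt M hp) ss)"
| "dlt M hp (Lf z) = undefined"
| "dlt M hp Bot = hp"

text \<open>q_M(t); the hole bottom is translated by state q into hq q.\<close>
fun qev :: "('f, 'g, 'q, 'p) dtla \<Rightarrow> 'p \<Rightarrow> ('q \<Rightarrow> ('g, 'w) tr) \<Rightarrow> 'q \<Rightarrow> 'f itr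
    \<Rightarrow> ('g, 'w) tr option" where
  "qev M hp hq q (Sym a ss) =
     (case rl M q a (map (dlt M hp) ss) of
        None \<Rightarrow> None
      | Some t \<Rightarrow> osubst t (\<lambda>x. if 0 < snd x \<and> snd x \<le> length ss
                 then (map (\<lambda>s q'. qev M hp hq q' s) ss ! (snd x - 1)) (fst x) else None))"
| "qev M hp hq q (Lf z) = None"
| "qev M hp hq q Bot = Some (hq q)"

definition semMc :: "('f, 'g, 'q, 'p) dtla \<Rightarrow> 'p \<Rightarrow> ('q \<Rightarrow> ('g, 'w) tr) \<Rightarrow> 'f itr
    \<Rightarrow> ('g, 'w) tr option" where
  "semMc M hp hq t = osubst (ax M (dlt M hp t)) (\<lambda>x. qev M hp hq (fst x) t)"

definition deltaM :: "('f, 'g, 'q, 'p) dtla \<Rightarrow> 'f itr \<Rightarrow> 'p" where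
  "deltaM M s = dlt M undefined s"

definition qsem :: "('f, 'g, 'q, 'p) dtla \<Rightarrow> 'q \<Rightarrow> 'f itr \<Rightarrow> ('g, 'w) tr option" where
  "qsem M q s = qev M undefined (\<lambda>_. Bot) q s"

definition transM :: "('f, 'g, 'q, 'p) dtla \<Rightarrow> 'f itr \<Rightarrow> ('g, unit) tr option" where
  "transM M s = semMc M undefined (\<lambda>_. Bot) s"

text \<open>M(C[p]) : output on a context with the hole as a leaf of look-ahead p, q_M(hole) = <q,p>.\<close>
definition ctxM :: "('f, 'g, 'q, 'p) dtla \<Rightarrow> 'f itr \<Rightarrow> 'p \<Rightarrow> ('g, 'q \<times> 'p) tr option" where
  "ctxM M C p = semMc M p (\<lambda>q. Lf (q, p)) C"

definition la_uniform :: "('f \<Rightarrow> nat) \<Rightarrow> 'f set \<Rightarrow> ('f, 'g, 'q, 'p) dtla \<Rightarrow> ('q \<Rightarrow> 'p) \<Rightarrow> bool" where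
  "la_uniform rk S M rho \<longleftrightarrow>
     (\<forall>q\<in>Qs M. rho q \<in> Ps M) \<and>
     (\<forall>q\<in>Qs M. {s. wfT rk S {} s \<and> (qsem M q s :: ('g, unit) tr option) \<noteq> None}
                = {s. wfT rk S {} s \<and> deltaM M s = rho q}) \<and>
     (\<forall>p\<in>Ps M. \<forall>q i. occurs (q, i) (ax M p) \<longrightarrow> rho q = p) \<and>
     (\<forall>q a ps t. rl M q a ps = Some t \<longrightarrow>
        (\<forall>q' i. occurs (q', i) t \<longrightarrow> rho q' = ps ! (i - 1))) \<and>
     (\<forall>q\<in>Qs M. \<forall>a\<in>S. \<forall>ps. length ps = rk a \<and> set ps \<subseteq> Ps M \<longrightarrow>
        (rl M q a ps \<noteq> None \<longleftrightarrow> dl M a ps = rho q))"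

definition total_dtla :: "('f \<Rightarrow> nat) \<Rightarrow> 'f set \<Rightarrow> ('f, 'g, 'q, 'p) dtla \<Rightarrow> bool" where
  "total_dtla rk S M \<longleftrightarrow> (\<forall>s. wfT rk S {} s \<longrightarrow> transM M s \<noteq> None)"

definition earliest :: "('f \<Rightarrow> nat) \<Rightarrow> 'f set \<Rightarrow> 'g set \<Rightarrow> ('f, 'g, 'q, 'p) dtla \<Rightarrow> bool" where
  "earliest rk S D M \<longleftrightarrow>
     \<not> (\<exists>q\<in>Qs M. \<exists>d\<in>D. \<forall>s. wfT rk S {} s \<and> (qsem M q s :: ('g, unit) tr option) \<noteq> None
          \<longrightarrow> (\<exists>ts. qsem M q s = (Some (Sym d ts) :: ('g, unit) tr option)))"

definition all_reachable :: "('f \<Rightarrow> nat) \<Rightarrow> 'f set \<Rightarrow> ('f, 'g, 'q, 'p) dtla \<Rightarrow> bool" where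
  "all_reachable rk S M \<longleftrightarrow>
     (\<forall>q\<in>Qs M. \<exists>C p t. is_context rk S C \<and> p \<in> Ps M \<and> ctxM M C p = Some t \<and> occurs (q, p) t)"

definition distinct_translations :: "('f \<Rightarrow> nat) \<Rightarrow> 'f set \<Rightarrow> ('f, 'g, 'q, 'p) dtla \<Rightarrow> bool" where
  "distinct_translations rk S M \<longleftrightarrow>
     (\<forall>q1\<in>Qs M. \<forall>q2\<in>Qs M. q1 \<noteq> q2 \<longrightarrow>
        (\<exists>s. wfT rk S {} s \<and> (qsem M q1 s :: ('g, unit) tr option) \<noteq> qsem M q2 s))"

text \<open>Canonical dtla, with rho the function witnessing la-uniformity.\<close>
definition canonical :: "('f \<Rightarrow> nat) \<Rightarrow> 'f set \<Rightarrow> ('g \<Rightarrow> nat) \<Rightarrow> 'g set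
    \<Rightarrow> ('f, 'g, 'q, 'p) dtla \<Rightarrow> ('q \<Rightarrow> 'p) \<Rightarrow> bool" where
  "canonical rk S rkD D M rho \<longleftrightarrow>
     is_dtla rk S rkD D M \<and> total_dtla rk S M \<and> la_uniform rk S M rho \<and>
     earliest rk S D M \<and> all_reachable rk S M \<and> distinct_translations rk S M"

definition is_dtpla :: "('f \<Rightarrow> nat) \<Rightarrow> 'f set \<Rightarrow> ('g \<Rightarrow> nat) \<Rightarrow> 'g set
    \<Rightarrow> ('f, 'g, 'q, 'p) dtla \<Rightarrow> bool" where
  "is_dtpla rk S rkD D M \<longleftrightarrow> is_dtla rk S rkD D M \<and> card (Ps M) \<ge> 2"

definition Omega :: "('q \<Rightarrow> 'p) \<Rightarrow> ('g, 'q \<times> nat) tr \<Rightarrow> ('g, 'q \<times> 'p) tr" where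
  "Omega rho t = subst t (\<lambda>x. Lf (fst x, rho (fst x)))"

definition rhsMphi :: "('f, 'g, 'q, 'p) dtla \<Rightarrow> ('r \<Rightarrow> 'p \<Rightarrow> ('g, 'q \<times> 'p) tr)
    \<Rightarrow> 'r \<Rightarrow> 'f \<Rightarrow> 'p list \<Rightarrow> ('g, 'q \<times> nat) tr" where
  "rhsMphi M phi q a ps = subst (phi q (dl M a ps)) (\<lambda>x. the (rl M (fst x) a ps))"

record ('f, 'g, 'r) dtop =
  QN :: "'r set"
  axN :: "('g, 'r \<times> nat) tr"
  rlN :: "'r \<Rightarrow> 'f \<Rightarrow> ('g, 'r \<times> nat) tr"

definition is_total_dtop :: "('f \<Rightarrow> nat) \<Rightarrow> 'f set \<Rightarrow> ('g \<Rightarrow> nat) \<Rightarrow> 'g set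
    \<Rightarrow> ('f, 'g, 'r) dtop \<Rightarrow> bool" where
  "is_total_dtop rk S rkD D N \<longleftrightarrow>
     finite (QN N) \<and> wfT rkD D (QN N \<times> {0}) (axN N) \<and>
     (\<forall>q\<in>QN N. \<forall>a\<in>S. wfT rkD D (QN N \<times> {1..rk a}) (rlN N q a))"

fun qevN :: "('f, 'g, 'r) dtop \<Rightarrow> ('r \<Rightarrow> ('g, 'w) tr) \<Rightarrow> 'r \<Rightarrow> 'f itr \<Rightarrow> ('g, 'w) tr" where
  "qevN N hq q (Sym a ss) =
     subst (rlN N q a) (\<lambda>x. if 0 < snd x \<and> snd x \<le> length ss
        then (map (\<lambda>s q'. qevN N hq q' s) ss ! (snd x - 1)) (fst x) else Bot)"
| "qevN N hq q (Lf z) = Bot"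
| "qevN N hq q Bot = hq q"

definition semNc :: "('f, 'g, 'r) dtop \<Rightarrow> ('r \<Rightarrow> ('g, 'w) tr) \<Rightarrow> 'f itr \<Rightarrow> ('g, 'w) tr" where
  "semNc N hq t = subst (axN N) (\<lambda>x. qevN N hq (fst x) t)"

definition transN :: "('f, 'g, 'r) dtop \<Rightarrow> 'f itr \<Rightarrow> ('g, unit) tr option" where
  "transN N s = Some (semNc N (\<lambda>_. Bot) s)"

text \<open>N(C): hole translated by state q into the leaf <q, bottom>, represented as Lf q.\<close>
definition all_reachableN :: "('f \<Rightarrow> nat) \<Rightarrow> 'f set \<Rightarrow> ('f, 'g, 'r) dtop \<Rightarrow> bool" where
  "all_reachableN rk S N \<longleftrightarrow>
     (\<forall>q\<in>QN N. \<exists>C. is_context rk S C \<and> occurs q (semNc N Lf C))"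

end

theory Submission
  imports Defs
begin


lemma le_tr_refl: "le_tr t t"
proof (induction t)
  case (Sym g ts) then show ?case by (auto intro!: le_tr.intros list.rel_refl_strong)
qed (auto intro: le_tr.intros)

lemma le_tr_antisym: "le_tr a b \<Longrightarrow> le_tr b a \<Longrightarrow> a = b"
proof (induction rule: le_tr.induct)
  case (1 t) then show ?case by (cases rule: le_tr.cases) auto
next
  case (2 z) then show ?case by simp
next
  case (3 ts us g)
  from 3(2) have "list_all2 le_tr us ts" by (cases rule: le_tr.cases) auto
  with 3(1) have "ts = us"
    by (induction ts arbitrary: us) (auto simp: list_all2_Cons1 list_all2_Cons2)
  then show ?case by simp
qed

fun args :: "('g,'z) tr \<Rightarrow> ('g,'z) tr list" where
  "args (Sym g us) = us" | "args _ = []"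

function glbS :: "('g,'z) tr set \<Rightarrow> ('g,'z) tr \<Rightarrow> ('g,'z) tr" where
 "glbS T (Sym g ts) = (if (\<forall>t\<in>T. \<exists>us. t = Sym g us \<and> length us = length ts)
    then Sym g (map (\<lambda>j. glbS ((\<lambda>t. args t ! j) ` T) (ts ! j)) [0..<length ts]) else Bot)"
| "glbS T (Lf z) = (if \<forall>t\<in>T. t = Lf z then Lf z else Bot)"
| "glbS T Bot = Bot"
  by pat_completeness auto
termination
  apply (relation "measure (size o snd)")
   apply simp
  apply simp
  by (meson nth_mem size_list_estimation' le_refl less_Suc_eq_le)

lemma le_tr_Sym_iff: "le_tr (Sym g hs) t \<longleftrightarrow> (\<exists>us. t = Sym g us \<and> list_all2 le_tr hs us)"
  by (auto elim: le_tr.cases intro: le_tr.intros)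

lemma le_tr_Lf_iff: "le_tr (Lf z) t \<longleftrightarrow> t = Lf z"
  by (auto elim: le_tr.cases intro: le_tr.intros)

lemma glbS_lb: "t0 \<in> T \<Longrightarrow> t \<in> T \<Longrightarrow> le_tr (glbS T t0) t"
proof (induction T t0 arbitrary: t rule: glbS.induct)
  case (1 T g ts)
  show ?case
  proof (cases "\<forall>t\<in>T. \<exists>us. t = Sym g us \<and> length us = length ts")
    case True
    then obtain us where t: "t = Sym g us" "length us = length ts" using 1(3) by blast
    have "list_all2 le_tr (map (\<lambda>j. glbS ((\<lambda>t. args t ! j) ` T) (ts ! j)) [0..<length ts]) us"
    proof (rule list_all2_all_nthI)
      fix j assume j: "j < length (map (\<lambda>j. glbS ((\<lambda>t. args t ! j) ` T) (ts ! j)) [0..<length ts])"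
      then have j': "j < length ts" by simp
      have "ts ! j \<in> (\<lambda>t. args t ! j) ` T" by (rule rev_image_eqI[OF 1(2)]) simp
      moreover have "us ! j \<in> (\<lambda>t. args t ! j) ` T" by (rule rev_image_eqI[OF 1(3)]) (simp add: t)
      ultimately show "le_tr (map (\<lambda>j. glbS ((\<lambda>t. args t ! j) ` T) (ts ! j)) [0..<length ts] ! j) (us ! j)"
        using 1(1)[OF True, of j] j' by simp
    qed (use t in simp)
    moreover have "glbS T (Sym g ts) = Sym g (map (\<lambda>j. glbS ((\<lambda>t. args t ! j) ` T) (ts ! j)) [0..<length ts])"
      by (simp only: glbS.simps if_P[OF True] if_True)
    ultimately show ?thesis using t(1) by (simp add: le_tr.intros)
  next
    case False then show ?thesis by (simp only: glbS.simps if_False le_tr.intros(1))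
  qed
next
  case (2 T z)
  show ?case
  proof (cases "\<forall>t\<in>T. t = Lf z")
    case True
    then have "t = Lf z" using 2(2) by blast
    moreover have "glbS T (Lf z) = Lf z" by (simp only: glbS.simps if_P[OF True] if_True)
    ultimately show ?thesis by (simp add: le_tr_refl)
  next
    case False then show ?thesis by (simp only: glbS.simps if_not_P[OF False] if_False) (rule le_tr.intros)
  qed
next
  case (3 T) then show ?case by (simp add: le_tr.intros)
qed

lemma glbS_gr: "t0 \<in> T \<Longrightarrow> \<forall>t\<in>T. le_tr g' t \<Longrightarrow> le_tr g' (glbS T t0)"
proof (induction T t0 arbitrary: g' rule: glbS.induct)
  case (1 T g ts)
  have "le_tr g' (Sym g ts)" using "1.prems" by blast
  then consider "g' = Bot" | hs where "g' = Sym g hs" "list_all2 le_tr hs ts"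
    by (cases rule: le_tr.cases) auto
  then show ?case
  proof cases
    case 1 then show ?thesis by (simp add: le_tr.intros)
  next
    case 2
    have cond: "\<forall>t\<in>T. \<exists>us. t = Sym g us \<and> length us = length ts"
    proof
      fix t assume "t \<in> T"
      with "1.prems" 2 obtain us where u: "t = Sym g us" "list_all2 le_tr hs us"
        by (auto simp: le_tr_Sym_iff)
      have "length hs = length us" using u(2) by (rule list_all2_lengthD)
      moreover have "length hs = length ts" using 2(2) by (rule list_all2_lengthD)
      ultimately show "\<exists>us. t = Sym g us \<and> length us = length ts"
        using u(1) by auto
    qed
    have "list_all2 le_tr hs (map (\<lambda>j. glbS ((\<lambda>t. args t ! j) ` T) (ts ! j)) [0..<length ts])"
    proof (rule list_all2_all_nthI)
      show "length hs = length (map (\<lambda>j. glbS ((\<lambda>t. args t ! j) ` T) (ts ! j)) [0..<length ts])"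
        using 2(2) by (simp add: list_all2_lengthD)
    next
      fix j assume "j < length hs"
      then have j': "j < length ts" using 2(2) by (simp add: list_all2_lengthD)
      have "ts ! j \<in> (\<lambda>t. args t ! j) ` T" by (rule rev_image_eqI[OF "1.prems"(1)]) simp
      moreover have "\<forall>t\<in>(\<lambda>t. args t ! j) ` T. le_tr (hs ! j) t"
      proof
        fix t' assume "t' \<in> (\<lambda>t. args t ! j) ` T"
        then obtain t where t: "t \<in> T" "t' = args t ! j" by blast
        with "1.prems" 2 obtain us where "t = Sym g us" "list_all2 le_tr hs us"
          by (auto simp: le_tr_Sym_iff)
        then show "le_tr (hs ! j) t'" using t j' 2(2) \<open>j < length hs\<close>
          by (auto dest: list_all2_nthD)
      qed
      ultimately show "le_tr (hs ! j) (map (\<lambda>j. glbS ((\<lambda>t. args t ! j) ` T) (ts ! j)) [0..<length ts] ! j)"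
        using "1.IH"[OF cond, of j] j' by simp
    qed
    moreover have "glbS T (Sym g ts) = Sym g (map (\<lambda>j. glbS ((\<lambda>t. args t ! j) ` T) (ts ! j)) [0..<length ts])"
      by (simp only: glbS.simps if_P[OF cond] if_True)
    ultimately show ?thesis using 2(1) by (simp add: le_tr.intros)
  qed
next
  case (2 T z)
  have "le_tr g' (Lf z)" using 2 by blast
  then have "g' = Bot \<or> g' = Lf z" by (cases rule: le_tr.cases) auto
  then show ?case
  proof
    assume "g' = Bot" then show ?thesis by (simp add: le_tr.intros)
  next
    assume g: "g' = Lf z"
    have A: "\<forall>t\<in>T. t = Lf z"
    proof
      fix t assume "t \<in> T"
      then have "le_tr (Lf z) t" using 2(2) g by blast
      then show "t = Lf z" by (simp only: le_tr_Lf_iff)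
    qed
    have "glbS T (Lf z) = Lf z" by (simp only: glbS.simps if_P[OF A] if_True)
    then show ?thesis using g by (simp add: le_tr_refl)
  qed
next
  case (3 T)
  have "le_tr g' Bot" using 3 by blast
  then show ?case by (cases rule: le_tr.cases) (auto intro: le_tr.intros)
qed

lemma glb_lb: "t \<in> T \<Longrightarrow> le_tr (glb T) t"
proof -
  assume t: "t \<in> T"
  have "glb T = glbS T t" unfolding glb_def
  proof (rule the_equality)
    show "(\<forall>ta\<in>T. le_tr (glbS T t) ta) \<and> (\<forall>g'. (\<forall>t\<in>T. le_tr g' t) \<longrightarrow> le_tr g' (glbS T t))"
      using glbS_lb[OF t] glbS_gr[OF t] by blast
  next
    fix g assume "(\<forall>t\<in>T. le_tr g t) \<and> (\<forall>g'. (\<forall>t\<in>T. le_tr g' t) \<longrightarrow> le_tr g' g)"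
    then have a: "\<forall>t\<in>T. le_tr g t" and b: "\<forall>g'. (\<forall>t\<in>T. le_tr g' t) \<longrightarrow> le_tr g' g" by auto
    have "le_tr g (glbS T t)" using glbS_gr[OF t a] .
    moreover have "le_tr (glbS T t) g" using b glbS_lb[OF t] by blast
    ultimately show "g = glbS T t" by (rule le_tr_antisym)
  qed
  then show ?thesis using glbS_lb[OF t t] by simp
qed



lemma subt_Sym_Suc: "subt (Sym g ts) (Suc j # v) = (if j < length ts then subt (ts ! j) v else None)"
  by simp

lemma subt_subst: "subt t v = Some u \<Longrightarrow> subt (subst t \<sigma>) v = Some (subst u \<sigma>)"
proof (induction t arbitrary: v)
  case (Sym g ts)
  show ?case
  proof (cases v)
    case Nil then show ?thesis using Sym by simp
  next
    case (Cons i w)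
    with Sym.prems have i: "1 \<le> i" "i \<le> length ts" and w: "subt (ts ! (i-1)) w = Some u"
      by (auto split: if_splits)
    have "ts ! (i-1) \<in> set ts" using i by simp
    then show ?thesis using Sym.IH[OF _ w] i Cons by simp
  qed
next
  case (Lf z) then show ?case by (cases v) auto
next
  case Bot then show ?case by (cases v) auto
qed

lemma subst_subst: "subst (subst t \<sigma>) \<tau> = subst t (\<lambda>x. subst (\<sigma> x) \<tau>)"
  by (induction t) auto

lemma occurs_Sym: "j < length ts \<Longrightarrow> occurs x (ts ! j) \<Longrightarrow> occurs x (Sym g ts)"
  unfolding occurs_def
proof -
  assume j: "j < length ts" and "\<exists>v. subt (ts ! j) v = Some (Lf x)"
  then obtain v where "subt (ts ! j) v = Some (Lf x)" by blast
  then have "subt (Sym g ts) (Suc j # v) = Some (Lf x)" using j by simp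
  then show "\<exists>v. subt (Sym g ts) v = Some (Lf x)" by blast
qed

lemma occurs_Sym_set: "t \<in> set ts \<Longrightarrow> occurs x t \<Longrightarrow> occurs x (Sym g ts)"
  by (metis in_set_conv_nth occurs_Sym)

lemma occurs_Lf_self: "occurs x (Lf x)"
  unfolding occurs_def by (rule exI[of _ "[]"]) simp

lemma occurs_Lf: "occurs y (Lf x) \<Longrightarrow> y = x"
  unfolding occurs_def by (metis option.inject subt.simps(1) subt.simps(3) neq_Nil_conv tr.inject(2) option.distinct(1))

lemma occurs_Bot: "\<not> occurs y Bot"
  unfolding occurs_def by (metis option.inject subt.simps(1) subt.simps(4) neq_Nil_conv tr.distinct(6) option.distinct(1))

lemma occurs_SymD: "occurs x (Sym g ts) \<Longrightarrow> \<exists>t\<in>set ts. occurs x t"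
  unfolding occurs_def
proof -
  assume "\<exists>v. subt (Sym g ts) v = Some (Lf x)"
  then obtain v where v: "subt (Sym g ts) v = Some (Lf x)" by blast
  then obtain i w where "v = i # w" by (cases v) auto
  with v have "1 \<le> i" "i \<le> length ts" "subt (ts ! (i-1)) w = Some (Lf x)" by (auto split: if_splits)
  then show "\<exists>t\<in>set ts. \<exists>v. subt t v = Some (Lf x)"
    by (metis Suc_le_eq diff_less less_le_trans nth_mem zero_less_one)
qed

lemma subst_cong: "(\<And>x. occurs x t \<Longrightarrow> \<sigma> x = \<sigma>' x) \<Longrightarrow> subst t \<sigma> = subst t \<sigma>'"
proof (induction t)
  case (Sym g ts)
  have "\<And>t. t \<in> set ts \<Longrightarrow> subst t \<sigma> = subst t \<sigma>'"
    using Sym.IH Sym.prems occurs_Sym_set by metis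
  then show ?case by simp
next
  case (Lf z) then show ?case using occurs_Lf_self[of z] by simp
qed simp

lemma osubst_Some: "(\<And>x. occurs x t \<Longrightarrow> \<rho> x \<noteq> None) \<Longrightarrow> osubst t \<rho> = Some (subst t (\<lambda>x. the (\<rho> x)))"
proof (induction t)
  case (Sym g ts)
  have e: "\<And>t. t \<in> set ts \<Longrightarrow> osubst t \<rho> = Some (subst t (\<lambda>x. the (\<rho> x)))"
    using Sym.IH Sym.prems occurs_Sym_set by metis
  then have "None \<notin> set (map (\<lambda>t. osubst t \<rho>) ts)" by auto
  moreover have "map the (map (\<lambda>t. osubst t \<rho>) ts) = map (\<lambda>t. subst t (\<lambda>x. the (\<rho> x))) ts"
    using e by simp
  ultimately show ?case by (simp add: Let_def)
next
  case (Lf z) then show ?case using occurs_Lf_self by force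
qed simp

lemma occurs_subst: "occurs y (subst t \<sigma>) \<Longrightarrow> \<exists>x. occurs x t \<and> occurs y (\<sigma> x)"
proof (induction t)
  case (Sym g ts)
  then obtain t where "t \<in> set (map (\<lambda>t. subst t \<sigma>) ts)" "occurs y t"
    using occurs_SymD by (metis subst.simps(1))
  then obtain t' where "t' \<in> set ts" "occurs y (subst t' \<sigma>)" by auto
  then show ?case using Sym.IH occurs_Sym_set by metis
next
  case (Lf z) then show ?case using occurs_Lf_self[of z] by auto
next
  case Bot then show ?case using occurs_Bot by (metis subst.simps(3))
qed

lemma wfT_occurs: "wfT rk D Z t \<Longrightarrow> occurs x t \<Longrightarrow> x \<in> Z"
proof (induction t)
  case (Sym g ts) then show ?case using occurs_SymD by fastforce
next
  case (Lf z) then show ?case using occurs_Lf by fastforce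
qed simp

lemma Phi_Sym: "Phi (Sym g ts) = Sym g (map Phi ts)"
  unfolding Phi_def by simp

lemma le_transfer:
  "le_tr (Phi R) (subst T \<sigma>1) \<Longrightarrow> (\<forall>x. \<exists>z. \<sigma>1 x = Lf z) \<Longrightarrow> le_tr (Phi R) (subst T \<sigma>2)"
proof (induction R arbitrary: T)
  case (Sym g rs)
  from Sym.prems(1) obtain us where us: "subst T \<sigma>1 = Sym g us" "list_all2 le_tr (map Phi rs) us"
    by (auto simp: Phi_Sym le_tr_Sym_iff)
  then obtain ts where T: "T = Sym g ts" "us = map (\<lambda>t. subst t \<sigma>1) ts"
    using Sym.prems(2) by (cases T) (auto, metis tr.distinct(1))
  have "list_all2 le_tr (map Phi rs) (map (\<lambda>t. subst t \<sigma>2) ts)"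
  proof (rule list_all2_all_nthI)
    have "length (map Phi rs) = length us" using us(2) by (simp add: list_all2_conv_all_nth)
    then have l: "length rs = length ts" using T(2) by simp
    then show "length (map Phi rs) = length (map (\<lambda>t. subst t \<sigma>2) ts)" by simp
  next
    fix j assume j: "j < length (map Phi rs)"
    have "length (map Phi rs) = length us" using us(2) by (simp add: list_all2_conv_all_nth)
    then have l: "length rs = length ts" using T(2) by simp
    have "le_tr (Phi (rs ! j)) (subst (ts ! j) \<sigma>1)"
      using list_all2_nthD[OF us(2)] j T(2) l by auto
    then have "le_tr (Phi (rs ! j)) (subst (ts ! j) \<sigma>2)"
      using Sym.IH[of "rs ! j" "ts ! j"] Sym.prems(2) j by simp
    then show "le_tr (map Phi rs ! j) (map (\<lambda>t. subst t \<sigma>2) ts ! j)" using j l by simp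
  qed
  then show ?case using T by (simp add: Phi_Sym le_tr.intros)
qed (simp_all add: Phi_def le_tr.intros)

lemma fill:
  "wfT rk D Z R \<Longrightarrow> le_tr (Phi R) T \<Longrightarrow>
   (\<And>v x. subt R v = Some (Lf x) \<Longrightarrow> subt T v = Some (\<sigma> x)) \<Longrightarrow> subst R \<sigma> = T"
proof (induction R arbitrary: T)
  case (Sym g rs)
  from Sym.prems(2) obtain us where us: "T = Sym g us" "list_all2 le_tr (map Phi rs) us"
    by (auto simp: Phi_Sym le_tr_Sym_iff)
  have l: "length rs = length us" using list_all2_lengthD[OF us(2)] by simp
  have "map (\<lambda>t. subst t \<sigma>) rs = us"
  proof (rule nth_equalityI)
    fix j assume "j < length (map (\<lambda>t. subst t \<sigma>) rs)"
    then have j: "j < length rs" by simp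
    have "subst (rs ! j) \<sigma> = us ! j"
    proof (rule Sym.IH)
      show "rs ! j \<in> set rs" using j by simp
      show "wfT rk D Z (rs ! j)" using Sym.prems(1) j by simp
      show "le_tr (Phi (rs ! j)) (us ! j)" using list_all2_nthD[OF us(2)] j by simp
      fix v x assume "subt (rs ! j) v = Some (Lf x)"
      then have "subt (Sym g rs) (Suc j # v) = Some (Lf x)" using j by simp
      then have "subt T (Suc j # v) = Some (\<sigma> x)" by (rule Sym.prems(3))
      then show "subt (us ! j) v = Some (\<sigma> x)" using us(1) j l by simp
    qed
    then show "map (\<lambda>t. subst t \<sigma>) rs ! j = us ! j" using j by simp
  qed (simp add: l)
  then show ?case using us by simp
next
  case (Lf z)
  have "subt T [] = Some (\<sigma> z)" using Lf.prems(3)[of "[]" z] by simp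
  then show ?case by simp
qed simp



lemma osubst_map: "osubst t (\<lambda>x. map_option (\<lambda>u. subst u \<sigma>) (\<rho> x)) = map_option (\<lambda>u. subst u \<sigma>) (osubst t \<rho>)"
proof (induction t)
  case (Sym g ts)
  have e: "map (\<lambda>t. osubst t (\<lambda>x. map_option (\<lambda>u. subst u \<sigma>) (\<rho> x))) ts
         = map (\<lambda>t. map_option (\<lambda>u. subst u \<sigma>) (osubst t \<rho>)) ts"
    using Sym.IH by simp
  show ?case
  proof (cases "None \<in> set (map (\<lambda>t. osubst t \<rho>) ts)")
    case True
    then have "None \<in> set (map (\<lambda>t. map_option (\<lambda>u. subst u \<sigma>) (osubst t \<rho>)) ts)" by force
    then show ?thesis using True e by (simp add: Let_def)
  next
    case False
    then have "None \<notin> set (map (\<lambda>t. map_option (\<lambda>u. subst u \<sigma>) (osubst t \<rho>)) ts)" by force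
    moreover have "map the (map (\<lambda>t. map_option (\<lambda>u. subst u \<sigma>) (osubst t \<rho>)) ts)
       = map (\<lambda>u. subst u \<sigma>) (map the (map (\<lambda>t. osubst t \<rho>) ts))"
    proof -
      have "\<And>t. t \<in> set ts \<Longrightarrow> osubst t \<rho> \<noteq> None" using False by force
      then show ?thesis by (simp add: option.map_sel)
    qed
    ultimately show ?thesis using False e by (simp add: Let_def)
  qed
qed simp_all

lemma qev_map: "qev M hp (\<lambda>q. subst (hq q) \<sigma>) q s = map_option (\<lambda>t. subst t \<sigma>) (qev M hp hq q s)"
proof (induction s arbitrary: q)
  case (Sym a ss)
  let ?f = "\<lambda>t. subst t \<sigma>"
  have e: "(\<lambda>x. if 0 < snd x \<and> snd x \<le> length ss
                 then (map (\<lambda>s q'. qev M hp (\<lambda>q. subst (hq q) \<sigma>) q' s) ss ! (snd x - 1)) (fst x) else None)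
        = (\<lambda>x. map_option ?f (if 0 < snd x \<and> snd x \<le> length ss
                 then (map (\<lambda>s q'. qev M hp hq q' s) ss ! (snd x - 1)) (fst x) else None))"
  proof
    fix x show "(if 0 < snd x \<and> snd x \<le> length ss
                 then (map (\<lambda>s q'. qev M hp (\<lambda>q. subst (hq q) \<sigma>) q' s) ss ! (snd x - 1)) (fst x) else None)
        = map_option ?f (if 0 < snd x \<and> snd x \<le> length ss
                 then (map (\<lambda>s q'. qev M hp hq q' s) ss ! (snd x - 1)) (fst x) else None)"
      using Sym.IH by auto
  qed
  show ?case
    by (simp only: qev.simps e osubst_map split: option.split) simp
qed simp_all

lemma qsem_map: "(qsem M q s :: ('g,'w2) tr option) = map_option (\<lambda>t. subst t \<sigma>) (qsem M q s :: ('g,'w) tr option)"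
  unfolding qsem_def using qev_map[of M undefined "\<lambda>_. Bot" \<sigma> q s] by simp

lemma deltaM_Ps: "is_dtla rk S rkD D M \<Longrightarrow> wfT rk S {} s \<Longrightarrow> deltaM M s \<in> Ps M"
  unfolding deltaM_def
proof (induction s)
  case (Sym a ss)
  have "set (map (dlt M undefined) ss) \<subseteq> Ps M" using Sym by auto
  moreover have "length (map (dlt M undefined) ss) = rk a" "a \<in> S" using Sym.prems by auto
  ultimately show ?case using Sym.prems(1) unfolding is_dtla_def by simp
qed simp_all

lemma qsem_def_unit: "la_uniform rk S M rho \<Longrightarrow> q \<in> Qs M \<Longrightarrow> wfT rk S {} s \<Longrightarrow> deltaM M s = rho q
   \<Longrightarrow> (qsem M q s :: ('g,unit) tr option) \<noteq> None"
  unfolding la_uniform_def by blast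

lemma qsem_defined: "la_uniform rk S M rho \<Longrightarrow> q \<in> Qs M \<Longrightarrow> wfT rk S {} s \<Longrightarrow> deltaM M s = rho q
   \<Longrightarrow> (qsem M q s :: ('g,'w) tr option) \<noteq> None"
  using qsem_def_unit[of rk S M rho q s] qsem_map[of M q s "\<lambda>_::unit. (Bot :: ('g,'w) tr)"] by auto

lemma lau_rl: "la_uniform rk S M rho \<Longrightarrow> q \<in> Qs M \<Longrightarrow> a \<in> S \<Longrightarrow> length ps = rk a \<Longrightarrow> set ps \<subseteq> Ps M
   \<Longrightarrow> (rl M q a ps \<noteq> None \<longleftrightarrow> dl M a ps = rho q)"
  unfolding la_uniform_def by blast

lemma lau_occ: "la_uniform rk S M rho \<Longrightarrow> rl M q a ps = Some t \<Longrightarrow> occurs (q', i) t \<Longrightarrow> rho q' = ps ! (i - 1)"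
  unfolding la_uniform_def by blast

lemma lau_ax: "la_uniform rk S M rho \<Longrightarrow> p \<in> Ps M \<Longrightarrow> occurs (q, i) (ax M p) \<Longrightarrow> rho q = p"
  unfolding la_uniform_def by blast

lemma dtla_dl: "is_dtla rk S rkD D M \<Longrightarrow> a \<in> S \<Longrightarrow> length ps = rk a \<Longrightarrow> set ps \<subseteq> Ps M \<Longrightarrow> dl M a ps \<in> Ps M"
  unfolding is_dtla_def by blast

lemma dtla_rl: "is_dtla rk S rkD D M \<Longrightarrow> rl M q a ps = Some t \<Longrightarrow> wfT rkD D (Qs M \<times> {1..rk a}) t"
  unfolding is_dtla_def by blast

lemma dtla_ax: "is_dtla rk S rkD D M \<Longrightarrow> p \<in> Ps M \<Longrightarrow> wfT rkD D (Qs M \<times> {0}) (ax M p)"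
  unfolding is_dtla_def by blast

lemma Ntot_rl: "is_total_dtop rk S rkD D N \<Longrightarrow> q \<in> QN N \<Longrightarrow> a \<in> S \<Longrightarrow> wfT rkD D (QN N \<times> {1..rk a}) (rlN N q a)"
  unfolding is_total_dtop_def by blast

lemma Ntot_ax: "is_total_dtop rk S rkD D N \<Longrightarrow> wfT rkD D (QN N \<times> {0}) (axN N)"
  unfolding is_total_dtop_def by blast



lemma occurs_subt: "subt t v = Some (Lf x) \<Longrightarrow> occurs x t"
  unfolding occurs_def by blast

lemma main_step:
  fixes M :: "('f, 'g, 'q, 'p) dtla" and N :: "('f, 'g, 'r) dtop"
    and phi :: "'r \<Rightarrow> 'p \<Rightarrow> ('g, 'q \<times> 'p) tr"
  assumes dtla: "is_dtla rk S rkD D M"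
    and lau: "la_uniform rk S M rho"
    and Ntot: "is_total_dtop rk S rkD D N"
    and phi_leaves: "\<forall>q\<in>QN N. \<forall>p\<in>Ps M.
        wfT rkD D {(qb, p) | qb. qb \<in> Qs M \<and> rho qb = p} (phi q p)"
    and cond_iii: "\<forall>q\<in>QN N. \<forall>a\<in>S.
        Phi (rlN N q a) = glb {Omega rho (rhsMphi M phi q a pl) | pl. length pl = rk a \<and> set pl \<subseteq> Ps M}"
    and cond_iv: "\<forall>q\<in>QN N. \<forall>qb\<in>QN N. \<forall>a\<in>S. \<forall>i\<in>{1..rk a}. \<forall>ss.
        length ss = rk a \<and> (\<forall>j\<in>{1..rk a}. j \<noteq> i \<longrightarrow> wfT rk S {} (ss ! (j - 1))) \<longrightarrow>
        (\<forall>p\<in>Ps M. \<forall>v\<in>Vbot (Phi (rlN N q a) :: ('g, unit) tr).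
          subt (rlN N q a) v = Some (Lf (qb, i)) \<longrightarrow>
          subt (subst (rhsMphi M phi q a ((map (deltaM M) ss)[i - 1 := p]))
                  (\<lambda>x. if snd x = i then Lf (fst x, rho (fst x))
                       else the (qsem M (fst x) (ss ! (snd x - 1))))) v
            = Some (phi qb p))"
  shows "wfT rk S {} s \<Longrightarrow> q \<in> QN N \<Longrightarrow>
    (qevN N (\<lambda>_. Bot) q s :: ('g, unit) tr) = subst (phi q (deltaM M s)) (\<lambda>x. the (qsem M (fst x) s))"
proof (induction s arbitrary: q)
  case (Sym a ss)
  have a: "a \<in> S" and len: "length ss = rk a" and wfss: "\<forall>s\<in>set ss. wfT rk S {} s"
    using Sym.prems by auto
  define pl where "pl = map (deltaM M) ss"
  have pl_len: "length pl = rk a" using len pl_def by simp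
  have pl_Ps: "set pl \<subseteq> Ps M" using wfss deltaM_Ps[OF dtla] pl_def by auto
  define p where "p = dl M a pl"
  have dS: "deltaM M (Sym a ss) = p" unfolding p_def pl_def deltaM_def by simp
  have pPs: "p \<in> Ps M" using dtla_dl[OF dtla a pl_len pl_Ps] unfolding p_def .
  define R where "R = rlN N q a"
  have wfR: "wfT rkD D (QN N \<times> {1..rk a}) R" using Ntot_rl[OF Ntot Sym.prems(2) a] unfolding R_def .
  define T where "T = rhsMphi M phi q a pl"
  define \<sigma>N :: "'r \<times> nat \<Rightarrow> ('g, unit) tr" where "\<sigma>N = (\<lambda>x. if 0 < snd x \<and> snd x \<le> length ss
        then (map (\<lambda>s q'. qevN N (\<lambda>_. Bot) q' s) ss ! (snd x - 1)) (fst x) else Bot)"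
  define \<tau> :: "'q \<times> nat \<Rightarrow> ('g, unit) tr" where "\<tau> = (\<lambda>x. if 0 < snd x \<and> snd x \<le> length ss
        then the (qsem M (fst x) (ss ! (snd x - 1))) else Bot)"
  have lhs: "(qevN N (\<lambda>_. Bot) q (Sym a ss) :: ('g, unit) tr) = subst R \<sigma>N"
    unfolding R_def \<sigma>N_def by simp
  have phiocc: "\<And>x. occurs x (phi q p) \<Longrightarrow> fst x \<in> Qs M \<and> rho (fst x) = p \<and> snd x = p"
  proof -
    fix x assume ox: "occurs x (phi q p)"
    have "wfT rkD D {(qb, p) | qb. qb \<in> Qs M \<and> rho qb = p} (phi q p)"
      using bspec[OF bspec[OF phi_leaves Sym.prems(2)] pPs] .
    then have "x \<in> {(qb, p) | qb. qb \<in> Qs M \<and> rho qb = p}"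
      by (rule wfT_occurs) (rule ox)
    then show "fst x \<in> Qs M \<and> rho (fst x) = p \<and> snd x = p" by auto
  qed
  have rlSome: "\<And>qt. qt \<in> Qs M \<Longrightarrow> rho qt = p \<Longrightarrow> \<exists>t. rl M qt a pl = Some t"
  proof -
    fix qt assume "qt \<in> Qs M" "rho qt = p"
    then have "rl M qt a pl \<noteq> None" using lau_rl[OF lau _ a pl_len pl_Ps, of qt] unfolding p_def by simp
    then show "\<exists>t. rl M qt a pl = Some t" by auto
  qed
  have rlocc: "\<And>qt t y. rl M qt a pl = Some t \<Longrightarrow> occurs y t \<Longrightarrow>
      fst y \<in> Qs M \<and> snd y \<in> {1..rk a} \<and> rho (fst y) = pl ! (snd y - 1)"
  proof -
    fix qt t y assume r: "rl M qt a pl = Some t" and o: "occurs y t"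
    have "wfT rkD D (Qs M \<times> {1..rk a}) t" using dtla_rl[OF dtla r] .
    then have "y \<in> Qs M \<times> {1..rk a}" by (rule wfT_occurs) (rule o)
    moreover have "rho (fst y) = pl ! (snd y - 1)" using lau_occ[OF lau r, of "fst y" "snd y"] o by simp
    ultimately show "fst y \<in> Qs M \<and> snd y \<in> {1..rk a} \<and> rho (fst y) = pl ! (snd y - 1)" by auto
  qed
  have Tocc: "\<And>y. occurs y T \<Longrightarrow> fst y \<in> Qs M \<and> snd y \<in> {1..rk a} \<and> rho (fst y) = pl ! (snd y - 1)"
  proof -
    fix y assume "occurs y T"
    then have "occurs y (subst (phi q p) (\<lambda>x. the (rl M (fst x) a pl)))"
      unfolding T_def rhsMphi_def p_def by simp
    from occurs_subst[OF this] obtain x where x: "occurs x (phi q p)" "occurs y (the (rl M (fst x) a pl))"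
      by blast
    have "fst x \<in> Qs M" "rho (fst x) = p" using phiocc[OF x(1)] by auto
    then obtain t where "rl M (fst x) a pl = Some t" using rlSome by blast
    then show "fst y \<in> Qs M \<and> snd y \<in> {1..rk a} \<and> rho (fst y) = pl ! (snd y - 1)"
      using rlocc x(2) by simp
  qed
  have qsem_ss: "\<And>y. fst y \<in> Qs M \<Longrightarrow> snd y \<in> {1..rk a} \<Longrightarrow> rho (fst y) = pl ! (snd y - 1) \<Longrightarrow>
      (qsem M (fst y) (ss ! (snd y - 1)) :: ('g, unit) tr option) \<noteq> None"
  proof -
    fix y :: "'q \<times> nat" assume y: "fst y \<in> Qs M" "snd y \<in> {1..rk a}" "rho (fst y) = pl ! (snd y - 1)"
    have k: "snd y - 1 < length ss" using y(2) len by auto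
    then have w: "wfT rk S {} (ss ! (snd y - 1))" using wfss by simp
    have "deltaM M (ss ! (snd y - 1)) = rho (fst y)" using y(3) k pl_def by simp
    then show "(qsem M (fst y) (ss ! (snd y - 1)) :: ('g, unit) tr option) \<noteq> None"
      by (rule qsem_defined[OF lau y(1) w])
  qed
  have rhs: "subst (phi q p) (\<lambda>x. the (qsem M (fst x) (Sym a ss))) = subst T \<tau>"
  proof -
    have "subst T \<tau> = subst (phi q p) (\<lambda>x. subst (the (rl M (fst x) a pl)) \<tau>)"
      unfolding T_def rhsMphi_def p_def[symmetric] by (simp add: subst_subst)
    also have "\<dots> = subst (phi q p) (\<lambda>x. the (qsem M (fst x) (Sym a ss)))"
    proof (rule subst_cong)
      fix x assume ox: "occurs x (phi q p)"
      then obtain t where t: "rl M (fst x) a pl = Some t" using rlSome phiocc by blast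
      define \<rho>' :: "'q \<times> nat \<Rightarrow> ('g, unit) tr option" where "\<rho>' = (\<lambda>y. if 0 < snd y \<and> snd y \<le> length ss
                 then (map (\<lambda>s q'. qev M undefined (\<lambda>_. Bot) q' s) ss ! (snd y - 1)) (fst y) else None)"
      have q1: "qsem M (fst x) (Sym a ss) = osubst t \<rho>'"
      proof -
        have e: "map (deltaM M) ss = map (dlt M undefined) ss" by (simp add: deltaM_def)
        have t': "rl M (fst x) a (map (dlt M undefined) ss) = Some t" using t unfolding pl_def e .
        show ?thesis unfolding qsem_def \<rho>'_def using t' by simp
      qed
      have q2: "\<And>y. occurs y t \<Longrightarrow> \<rho>' y = qsem M (fst y) (ss ! (snd y - 1))"
      proof -
        fix y assume "occurs y t"
        then have "snd y \<in> {1..rk a}" using rlocc[OF t] by blast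
        then have "0 < snd y" "snd y \<le> length ss" "snd y - 1 < length ss" using len by auto
        then show "\<rho>' y = qsem M (fst y) (ss ! (snd y - 1))"
          unfolding \<rho>'_def qsem_def by simp
      qed
      have o1: "osubst t \<rho>' = Some (subst t (\<lambda>y. the (\<rho>' y)))"
      proof (rule osubst_Some)
        fix y assume oy: "occurs y t"
        have "fst y \<in> Qs M \<and> snd y \<in> {1..rk a} \<and> rho (fst y) = pl ! (snd y - 1)" using rlocc[OF t oy] .
        then have "(qsem M (fst y) (ss ! (snd y - 1)) :: ('g, unit) tr option) \<noteq> None"
          using qsem_ss by blast
        then show "\<rho>' y \<noteq> None" using q2[OF oy] by simp
      qed
      have o2: "subst t (\<lambda>y. the (\<rho>' y)) = subst t \<tau>"
      proof (rule subst_cong)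
        fix y assume oy: "occurs y t"
        then have "snd y \<in> {1..rk a}" using rlocc[OF t] by blast
        then have "0 < snd y" "snd y \<le> length ss" using len by auto
        then show "the (\<rho>' y) = \<tau> y" using q2[OF oy] unfolding \<tau>_def by simp
      qed
      show "subst (the (rl M (fst x) a pl)) \<tau> = the (qsem M (fst x) (Sym a ss))"
        unfolding q1 o1 option.sel o2 t ..
    qed
    finally show ?thesis by simp
  qed
  have le1: "le_tr (Phi R) (Omega rho T)"
  proof -
    have "Omega rho T \<in> {Omega rho (rhsMphi M phi q a pl) | pl. length pl = rk a \<and> set pl \<subseteq> Ps M}"
      unfolding T_def using pl_len pl_Ps by blast
    moreover have "Phi R = glb {Omega rho (rhsMphi M phi q a pl) | pl. length pl = rk a \<and> set pl \<subseteq> Ps M}"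
      using bspec[OF bspec[OF cond_iii Sym.prems(2)] a] unfolding R_def .
    ultimately show ?thesis by (simp only: glb_lb)
  qed
  have le2: "le_tr (Phi R) (subst T \<tau>)"
  proof (rule le_transfer)
    show "le_tr (Phi R) (subst T (\<lambda>x. Lf (fst x, rho (fst x))))" using le1 unfolding Omega_def .
    show "\<forall>x. \<exists>z. Lf (fst x, rho (fst x)) = Lf z" by blast
  qed
  have main: "subst R \<sigma>N = subst T \<tau>"
  proof (rule fill[OF wfR le2])
    fix v x assume vx: "subt R v = Some (Lf x)"
    obtain qb i where x: "x = (qb, i)" by (cases x)
    have "x \<in> QN N \<times> {1..rk a}" using wfT_occurs[OF wfR occurs_subt[OF vx]] .
    then have qb: "qb \<in> QN N" and i: "i \<in> {1..rk a}" using x by auto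
    have ilt: "i - 1 < length ss" using i len by auto
    have ipos: "0 < i" "i \<le> length ss" using i len by auto
    define si where "si = ss ! (i - 1)"
    have si_set: "si \<in> set ss" using ilt si_def by simp
    define pi where "pi = deltaM M si"
    have wsi: "wfT rk S {} si" using wfss si_set by blast
    have piPs: "pi \<in> Ps M" unfolding pi_def by (rule deltaM_Ps[OF dtla wsi])
    have vbot: "v \<in> Vbot (Phi R :: ('g, unit) tr)"
    proof -
      have "subt (subst R (\<lambda>_. Bot :: ('g, unit) tr)) v = Some (subst (Lf x) (\<lambda>_. Bot :: ('g, unit) tr))"
        by (rule subt_subst[OF vx])
      then show ?thesis unfolding Vbot_def Phi_def by simp
    qed
    have upd: "(map (deltaM M) ss)[i - 1 := pi] = pl"
    proof -
      have "(map (deltaM M) ss) ! (i - 1) = pi" using ilt pi_def si_def by simp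
      then show ?thesis unfolding pl_def using list_update_id[of "map (deltaM M) ss" "i - 1"] by simp
    qed
    have pre: "length ss = rk a \<and> (\<forall>j\<in>{1..rk a}. j \<noteq> i \<longrightarrow> wfT rk S {} (ss ! (j - 1)))"
      using len wfss by auto
    define \<sigma>i :: "'q \<times> nat \<Rightarrow> ('g, 'q \<times> 'p) tr" where "\<sigma>i = (\<lambda>x. if snd x = i then Lf (fst x, rho (fst x))
                       else the (qsem M (fst x) (ss ! (snd x - 1))))"
    have c4: "subt (subst T \<sigma>i) v = Some (phi qb pi)"
    proof -
      have h: "\<forall>p\<in>Ps M. \<forall>v\<in>Vbot (Phi (rlN N q a) :: ('g, unit) tr).
          subt (rlN N q a) v = Some (Lf (qb, i)) \<longrightarrow>
          subt (subst (rhsMphi M phi q a ((map (deltaM M) ss)[i - 1 := p]))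
                  (\<lambda>x. if snd x = i then Lf (fst x, rho (fst x))
                       else the (qsem M (fst x) (ss ! (snd x - 1))))) v
            = Some (phi qb p)"
        using mp[OF spec[OF bspec[OF bspec[OF bspec[OF bspec[OF cond_iv Sym.prems(2)] qb] a] i], of ss] pre] .
      have vb: "v \<in> Vbot (Phi (rlN N q a) :: ('g, unit) tr)" using vbot unfolding R_def .
      have vx': "subt (rlN N q a) v = Some (Lf (qb, i))" using vx x unfolding R_def by simp
      have "subt (subst (rhsMphi M phi q a ((map (deltaM M) ss)[i - 1 := pi]))
                  (\<lambda>x. if snd x = i then Lf (fst x, rho (fst x))
                       else the (qsem M (fst x) (ss ! (snd x - 1))))) v
            = Some (phi qb pi)"
        using mp[OF bspec[OF bspec[OF h piPs] vb] vx'] .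
      then show ?thesis unfolding upd T_def[symmetric] \<sigma>i_def .
    qed
    define \<tau>i :: "'q \<times> 'p \<Rightarrow> ('g, unit) tr" where "\<tau>i = (\<lambda>y. the (qsem M (fst y) si))"
    have "subt (subst (subst T \<sigma>i) \<tau>i) v = Some (subst (phi qb pi) \<tau>i)"
      by (rule subt_subst[OF c4])
    moreover have "subst (phi qb pi) \<tau>i = qevN N (\<lambda>_. Bot) qb si"
      using Sym.IH[OF si_set _ qb] wfss si_set unfolding \<tau>i_def pi_def by simp
    moreover have "subst (subst T \<sigma>i) \<tau>i = subst T \<tau>"
      unfolding subst_subst
    proof (rule subst_cong)
      fix y assume "occurs y T"
      then have y: "fst y \<in> Qs M" "snd y \<in> {1..rk a}" "rho (fst y) = pl ! (snd y - 1)" using Tocc by auto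
      show "subst (\<sigma>i y) \<tau>i = \<tau> y"
      proof (cases "snd y = i")
        case True then show ?thesis unfolding \<sigma>i_def \<tau>i_def \<tau>_def si_def using ipos by simp
      next
        case False
        have ne: "(qsem M (fst y) (ss ! (snd y - 1)) :: ('g, unit) tr option) \<noteq> None"
          using qsem_ss y by blast
        have "(qsem M (fst y) (ss ! (snd y - 1)) :: ('g, unit) tr option)
            = map_option (\<lambda>t. subst t \<tau>i) (qsem M (fst y) (ss ! (snd y - 1)) :: ('g, 'q \<times> 'p) tr option)"
          by (rule qsem_map)
        then have "the (qsem M (fst y) (ss ! (snd y - 1)) :: ('g, unit) tr option)
            = subst (the (qsem M (fst y) (ss ! (snd y - 1)) :: ('g, 'q \<times> 'p) tr option)) \<tau>i"
          using ne by (cases "qsem M (fst y) (ss ! (snd y - 1)) :: ('g, 'q \<times> 'p) tr option") auto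
        then show ?thesis unfolding \<sigma>i_def \<tau>_def using False y(2) len by auto
      qed
    qed
    moreover have "\<sigma>N x = qevN N (\<lambda>_. Bot) qb si"
      unfolding \<sigma>N_def x si_def using i len ilt by simp
    ultimately show "subt (subst T \<tau>) v = Some (\<sigma>N x)" by simp
  qed
  show ?case using lhs main rhs dS by simp
qed simp_all



theorem mainTheorem11:
  fixes rk :: "'f \<Rightarrow> nat" and S :: "'f set"
    and rkD :: "'g \<Rightarrow> nat" and D :: "'g set"
    and M :: "('f, 'g, 'q, 'p) dtla" and rho :: "'q \<Rightarrow> 'p"
    and ps :: "'p list"
    and N :: "('f, 'g, ('g, 'q \<times> 'p) tr list) dtop"
    and phi :: "('g, 'q \<times> 'p) tr list \<Rightarrow> 'p \<Rightarrow> ('g, 'q \<times> 'p) tr"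
  assumes alphS: "finite S" and alphD: "finite D"
    and canon: "canonical rk S rkD D M rho"
    and dtpla: "is_dtpla rk S rkD D M"
    and enum: "distinct ps" "set ps = Ps M"
    and Ntot: "is_total_dtop rk S rkD D N"
    and Nreach: "all_reachableN rk S N"
    and QNsub: "\<forall>q\<in>QN N. length q = length ps \<and> (\<forall>t\<in>set q. wfT rkD D (Qs M \<times> Ps M) t)"
    and phi_def: "\<forall>q\<in>QN N. \<forall>i<length ps. phi q (ps ! i) = q ! i"
    and phi_leaves: "\<forall>q\<in>QN N. \<forall>p\<in>Ps M.
        wfT rkD D {(qb, p) | qb. qb \<in> Qs M \<and> rho qb = p} (phi q p)"
    and cond_i: "Phi (axN N) = glb {Omega rho (ax M p) | p. p \<in> Ps M}"
    and cond_ii: "\<forall>v. \<forall>q\<in>QN N. \<forall>p\<in>Ps M.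
        subt (axN N) v = Some (Lf (q, 0)) \<longrightarrow> subt (Omega rho (ax M p)) v = Some (phi q p)"
    and cond_iii: "\<forall>q\<in>QN N. \<forall>a\<in>S.
        Phi (rlN N q a) = glb {Omega rho (rhsMphi M phi q a pl) | pl. length pl = rk a \<and> set pl \<subseteq> Ps M}"
    and cond_iv: "\<forall>q\<in>QN N. \<forall>qb\<in>QN N. \<forall>a\<in>S. \<forall>i\<in>{1..rk a}. \<forall>ss.
        length ss = rk a \<and> (\<forall>j\<in>{1..rk a}. j \<noteq> i \<longrightarrow> wfT rk S {} (ss ! (j - 1))) \<longrightarrow>
        (\<forall>p\<in>Ps M. \<forall>v\<in>Vbot (Phi (rlN N q a) :: ('g, unit) tr).
          subt (rlN N q a) v = Some (Lf (qb, i)) \<longrightarrow>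
          subt (subst (rhsMphi M phi q a ((map (deltaM M) ss)[i - 1 := p]))
                  (\<lambda>x. if snd x = i then Lf (fst x, rho (fst x))
                       else the (qsem M (fst x) (ss ! (snd x - 1))))) v
            = Some (phi qb p))"
  shows "\<forall>s. wfT rk S {} s \<longrightarrow> transN N s = transM M s"
proof (intro allI impI)
  fix s :: "'f itr" assume ws: "wfT rk S {} s"
  have dtla: "is_dtla rk S rkD D M" and lau: "la_uniform rk S M rho"
    using canon unfolding canonical_def by auto
  define p where "p = deltaM M s"
  have pPs: "p \<in> Ps M" unfolding p_def by (rule deltaM_Ps[OF dtla ws])
  have axwf: "wfT rkD D (Qs M \<times> {0}) (ax M p)" by (rule dtla_ax[OF dtla pPs])
  define \<tau>' :: "'q \<times> 'p \<Rightarrow> ('g, unit) tr" where "\<tau>' = (\<lambda>y. the (qsem M (fst y) s))"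
  have tM: "transM M s = Some (subst (ax M p) (\<lambda>x. the (qsem M (fst x) s)))"
  proof -
    have "transM M s = osubst (ax M p) (\<lambda>x. qsem M (fst x) s)"
      unfolding transM_def semMc_def qsem_def p_def deltaM_def by simp
    also have "\<dots> = Some (subst (ax M p) (\<lambda>x. the (qsem M (fst x) s)))"
    proof (rule osubst_Some)
      fix x assume ox: "occurs x (ax M p)"
      have "x \<in> Qs M \<times> {0}" by (rule wfT_occurs[OF axwf ox])
      then have q: "fst x \<in> Qs M" by auto
      have "rho (fst x) = p" using lau_ax[OF lau pPs, of "fst x" "snd x"] ox by simp
      then have "deltaM M s = rho (fst x)" unfolding p_def by simp
      then show "(qsem M (fst x) s :: ('g, unit) tr option) \<noteq> None"
        by (rule qsem_defined[OF lau q ws])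
    qed
    finally show ?thesis .
  qed
  have wfA: "wfT rkD D (QN N \<times> {0}) (axN N)" by (rule Ntot_ax[OF Ntot])
  have le1: "le_tr (Phi (axN N)) (Omega rho (ax M p))"
  proof -
    have "Omega rho (ax M p) \<in> {Omega rho (ax M p) | p. p \<in> Ps M}" using pPs by blast
    then show ?thesis unfolding cond_i by (rule glb_lb)
  qed
  have le2: "le_tr (Phi (axN N)) (subst (ax M p) (\<lambda>x. the (qsem M (fst x) s)))"
  proof (rule le_transfer)
    show "le_tr (Phi (axN N)) (subst (ax M p) (\<lambda>x. Lf (fst x, rho (fst x))))" using le1 unfolding Omega_def .
    show "\<forall>x. \<exists>z. Lf (fst x, rho (fst x)) = Lf z" by blast
  qed
  have "subst (axN N) (\<lambda>x. qevN N (\<lambda>_. Bot) (fst x) s) = (subst (ax M p) (\<lambda>x. the (qsem M (fst x) s)) :: ('g, unit) tr)"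
  proof (rule fill[OF wfA le2])
    fix v x assume vx: "subt (axN N) v = Some (Lf x)"
    have "x \<in> QN N \<times> {0}" using wfT_occurs[OF wfA occurs_subt[OF vx]] .
    then obtain q where x: "x = (q, 0)" and q: "q \<in> QN N" by auto
    have c2: "subt (Omega rho (ax M p)) v = Some (phi q p)"
      using cond_ii q pPs vx x by blast
    have "subt (subst (Omega rho (ax M p)) \<tau>') v = Some (subst (phi q p) \<tau>')"
      by (rule subt_subst[OF c2])
    moreover have "subst (Omega rho (ax M p)) \<tau>' = subst (ax M p) (\<lambda>x. the (qsem M (fst x) s))"
      unfolding Omega_def subst_subst \<tau>'_def by simp
    moreover have "subst (phi q p) \<tau>' = qevN N (\<lambda>_. Bot) q s"
      using main_step[OF dtla lau Ntot phi_leaves cond_iii cond_iv ws q] unfolding \<tau>'_def p_def by simp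
    ultimately show "subt (subst (ax M p) (\<lambda>x. the (qsem M (fst x) s))) v = Some (qevN N (\<lambda>_. Bot) (fst x) s :: ('g, unit) tr)"
      using x by simp
  qed
  then show "transN N s = transM M s" unfolding tM transN_def semNc_def by simp
qed

end
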